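(* Let $\alpha\ge2$. Then there do not exist $\sigma<1/2$ and $C>0$ such that $\|u\|_{L^{\alpha+2}(\Theta)}\le C\|u\|_{H^\sigma_{rad}(\Theta)}$ for all $u\in H^\sigma_{rad}(\Theta)$.
   Context: $\Theta$ is the open unit disc of $\mathbb R^2$; radial functions depend only on $r=|x|$. Let $0<z_1<z_2<\cdots$ be the positive zeros of the Bessel function $J_0$ and $e_n(r)=J_0(z_nr)/\|J_0(z_n|\cdot|)\|_{L^2(\Theta)}$ (orthonormal basis of radial $L^2(\Theta)$ of Dirichlet eigenfunctions of $-\Delta$, eigenvalues $z_n^2$). For $\sigma\ge0$, $H^\sigma_{rad}(\Theta)$ is the space of radial $u=\sum_na_ne_n$ with $\|u\|_{H^\sigma_{rad}(\Theta)}^2=\sum_n z_n^{2\sigma}|a_n|^2<\infty$. *)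

theory Defs
  imports "HOL-Analysis.Analysis"
begin

definition Theta :: "(real^2) set" where
  "Theta = ball 0 1"

definition J0 :: "real \<Rightarrow> real" where
  "J0 x = (\<Sum>k. (-1)^k / (fact k)^2 * (x/2)^(2*k))"

text \<open>Positive zeros of J0 in increasing order, indexed from 0:
  besselz n is the positive zero having exactly n positive zeros below it
  (z_{n+1} in the paper's 1-based indexing).\<close>
definition besselz :: "nat \<Rightarrow> real" where
  "besselz n = (THE x. 0 < x \<and> J0 x = 0 \<and>
      finite {y. 0 < y \<and> y < x \<and> J0 y = 0} \<and>
      card {y. 0 < y \<and> y < x \<and> J0 y = 0} = n)"

text \<open>Normalized radial Dirichlet eigenfunctions, as functions of r = |x|.\<close>
definition eigen :: "nat \<Rightarrow> real \<Rightarrow> real" where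
  "eigen n r = J0 (besselz n * r) /
     sqrt (LINT x:Theta|lborel. (J0 (besselz n * norm x))^2)"

definition radial_on :: "(real^2) set \<Rightarrow> (real^2 \<Rightarrow> complex) \<Rightarrow> bool" where
  "radial_on S u \<longleftrightarrow> (\<forall>x\<in>S. \<forall>y\<in>S. norm x = norm y \<longrightarrow> u x = u y)"

definition L2_rad :: "(real^2 \<Rightarrow> complex) set" where
  "L2_rad = {u. set_borel_measurable lborel Theta u \<and>
                set_integrable lborel Theta (\<lambda>x. (cmod (u x))^2) \<and>
                radial_on Theta u}"

definition coef :: "nat \<Rightarrow> (real^2 \<Rightarrow> complex) \<Rightarrow> complex" where
  "coef n u = (LINT x:Theta|lborel. eigen n (norm x) *\<^sub>R u x)"

definition H_rad :: "real \<Rightarrow> (real^2 \<Rightarrow> complex) set" where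
  "H_rad \<sigma> = {u \<in> L2_rad.
     summable (\<lambda>n. besselz n powr (2*\<sigma>) * (cmod (coef n u))^2)}"

definition H_norm :: "real \<Rightarrow> (real^2 \<Rightarrow> complex) \<Rightarrow> real" where
  "H_norm \<sigma> u = sqrt (\<Sum>n. besselz n powr (2*\<sigma>) * (cmod (coef n u))^2)"

end

theory Submission
  imports Defs
begin


definition cc :: "nat \<Rightarrow> real" where "cc k = (-1)^k / (fact k)^2"
definition FF :: "real \<Rightarrow> real" where "FF t = (\<Sum>k. cc k * t^k)"
definition FD :: "real \<Rightarrow> real" where "FD t = (\<Sum>k. diffs cc k * t^k)"
definition GG :: "real \<Rightarrow> real" where "GG t = (\<Sum>k. (real k * cc k) * t^k)"

lemma summable_fact_bound:
  fixes a :: "nat \<Rightarrow> real"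
  assumes "\<And>k. \<bar>a k\<bar> \<le> 1 / fact k"
  shows "summable (\<lambda>k. a k * t^k)"
proof (rule summable_norm_cancel, rule summable_comparison_test[OF _ summable_exp[of "\<bar>t\<bar>"]])
  show "\<exists>N. \<forall>n\<ge>N. norm (norm (a n * t ^ n)) \<le> inverse (fact n) * \<bar>t\<bar> ^ n"
    using assms by (auto intro!: exI[of _ 0] mult_right_mono simp: abs_mult power_abs divide_inverse)
qed

lemma cc_bound: "\<bar>cc k\<bar> \<le> 1 / fact k"
proof -
  have "(fact k::real) \<le> (fact k)^2" by (simp add: power2_eq_square)
  then show ?thesis by (simp add: cc_def abs_mult power_abs frac_le)
qed

lemma diffs_cc: "diffs cc k = real (Suc k) * cc (Suc k)"
  by (simp add: diffs_def)

lemma diffs_cc_bound: "\<bar>diffs cc k\<bar> \<le> 1 / fact k"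
proof -
  have "\<bar>diffs cc k\<bar> = real (Suc k) / (fact (Suc k))^2"
    by (simp add: diffs_def cc_def abs_mult power_abs)
  also have "\<dots> = 1 / (fact k * fact (Suc k))"
  proof -
    have "(fact (Suc k)::real) = real (Suc k) * fact k" by simp
    then show ?thesis by (simp add: power2_eq_square field_simps del: fact_Suc of_nat_Suc)
  qed
  also have "\<dots> \<le> 1 / fact k"
  proof (rule frac_le)
    show "(fact k::real) \<le> fact k * fact (Suc k)"
      using fact_ge_1[of "Suc k", where 'a=real] by (simp add: mult_le_cancel_left1)
  qed auto
  finally show ?thesis .
qed

lemma kcc_bound: "\<bar>real k * cc k\<bar> \<le> 1 / fact k"
proof (cases k)
  case 0 then show ?thesis by (simp add: cc_def)
next
  case (Suc m)
  have "\<bar>real k * cc k\<bar> = real k / (fact k)^2"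
    by (simp add: cc_def abs_mult power_abs)
  also have "\<dots> = 1 / (fact m * fact k)"
  proof -
    have "(fact k::real) = real k * fact m" using Suc by simp
    then show ?thesis using Suc by (simp add: power2_eq_square field_simps del: fact_Suc of_nat_Suc)
  qed
  also have "\<dots> \<le> 1 / fact k" by (simp add: frac_le)
  finally show ?thesis .
qed

lemma diffs_kcc: "diffs (\<lambda>k. real k * cc k) = (\<lambda>k. - cc k)"
proof
  fix k
  have "(fact (Suc k)::real) = real (Suc k) * fact k" by simp
  then have "real (Suc k) * (real (Suc k) * cc (Suc k)) = - cc k"
    unfolding cc_def by (simp add: power2_eq_square field_simps del: fact_Suc of_nat_Suc)
  then show "diffs (\<lambda>k. real k * cc k) k = - cc k" by (simp add: diffs_def)
qed

lemma FF_deriv: "(FF has_real_derivative FD t) (at t)"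
  unfolding FF_def FD_def
  by (rule termdiffs_strong_converges_everywhere) (rule summable_fact_bound[OF cc_bound])

lemma GG_deriv: "(GG has_real_derivative (- FF t)) (at t)"
proof -
  have "(GG has_real_derivative (\<Sum>k. diffs (\<lambda>k. real k * cc k) k * t^k)) (at t)"
    unfolding GG_def
    by (rule termdiffs_strong_converges_everywhere) (rule summable_fact_bound[OF kcc_bound])
  moreover have "(\<Sum>k. diffs (\<lambda>k. real k * cc k) k * t^k) = - FF t"
    unfolding diffs_kcc FF_def using suminf_minus[OF summable_fact_bound[OF cc_bound]]
    by simp
  ultimately show ?thesis by simp
qed

lemma GG_eq: "GG t = t * FD t"
proof -
  have s: "(\<lambda>k. diffs cc k * t^k) sums FD t"
    unfolding FD_def by (rule summable_sums, rule summable_fact_bound[OF diffs_cc_bound])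
  have "(\<lambda>k. t * (diffs cc k * t^k)) sums (t * FD t)"
    by (rule sums_mult[OF s])
  then have "(\<lambda>k. (real (Suc k) * cc (Suc k)) * t^(Suc k)) sums (t * FD t)"
    by (simp add: diffs_cc mult_ac)
  then have "(\<lambda>k. (real k * cc k) * t^k) sums (t * FD t + (real 0 * cc 0) * t^0)"
    by (subst sums_Suc_iff[symmetric]) simp
  then show ?thesis unfolding GG_def by (simp add: sums_iff)
qed

lemma FF_0: "FF 0 = 1"
  unfolding FF_def using powser_zero[of cc] by (simp add: cc_def)

lemma GG_0: "GG 0 = 0"
  by (simp add: GG_eq)

lemma J0_FF: "J0 x = FF (x^2/4)"
  unfolding J0_def FF_def cc_def
  by (simp add: power_mult power_divide)

lemma FF_cont: "continuous_on S FF"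
  using FF_deriv by (meson DERIV_continuous continuous_at_imp_continuous_on)
lemma GG_cont: "continuous_on S GG"
  using GG_deriv by (meson DERIV_continuous continuous_at_imp_continuous_on)


definition pp :: "real \<Rightarrow> real" where "pp x = 2 * GG (x^2/4)"

lemma J0_fun: "J0 = (\<lambda>x. FF (x^2/4))"
  by (rule ext) (simp add: J0_FF)

lemma J0_deriv: "(J0 has_real_derivative FD (x^2/4) * (x/2)) (at x)"
proof -
  have "((\<lambda>x. FF (x^2/4)) has_real_derivative FD (x^2/4) * (2 * x / 4)) (at x)"
    by (rule DERIV_chain2[OF FF_deriv]) (auto intro!: derivative_eq_intros)
  then show ?thesis by (simp add: J0_fun)
qed

lemma pp_deriv: "(pp has_real_derivative - x * J0 x) (at x)"
proof -
  have "((\<lambda>x. 2 * GG (x^2/4)) has_real_derivative 2 * (- FF (x^2/4) * (2 * x / 4))) (at x)"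
    by (intro DERIV_cmult DERIV_chain2[OF GG_deriv]) (auto intro!: derivative_eq_intros)
  then show ?thesis unfolding pp_def[abs_def]
    by (rule DERIV_cong) (simp add: J0_FF)
qed

lemma pp_rel: "x * (FD (x^2/4) * (x/2)) = pp x"
  by (simp add: pp_def GG_eq power2_eq_square)

lemma J0_deriv': "x > 0 \<Longrightarrow> (J0 has_real_derivative pp x / x) (at x)"
proof -
  assume x: "x > 0"
  have "FD (x^2/4) * (x/2) = pp x / x" using pp_rel[of x] x by (simp add: field_simps)
  then show ?thesis using J0_deriv[of x] by simp
qed

lemma J0_0: "J0 0 = 1" by (simp add: J0_FF FF_0)
lemma pp_0: "pp 0 = 0" by (simp add: pp_def GG_0)

lemma J0_cont: "continuous_on S J0"
  using J0_deriv by (meson DERIV_continuous continuous_at_imp_continuous_on)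
lemma J0_isCont: "isCont J0 x"
  using J0_deriv by (meson DERIV_continuous)

lemma zero_nondeg:
  assumes c: "c > 0" "J0 c = 0"
  shows "pp c \<noteq> 0"
proof
  assume pc: "pp c = 0"
  define H where "H x = x^2 * (J0 x)^2 + (pp x)^2" for x
  have dH: "(H has_real_derivative 2 * x * (J0 x)^2) (at x)" for x
  proof -
    have "(H has_real_derivative (2 * x * (J0 x)^2 + x^2 * (2 * J0 x * (FD (x^2/4) * (x/2)))
          + 2 * pp x * (- x * J0 x))) (at x)"
      unfolding H_def[abs_def]
      by (auto intro!: derivative_eq_intros J0_deriv pp_deriv simp: power2_eq_square)
    moreover have "2 * x * (J0 x)^2 + x^2 * (2 * J0 x * (FD (x^2/4) * (x/2)))
          + 2 * pp x * (- x * J0 x) = 2 * x * (J0 x)^2"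
      using pp_rel[of x] by (simp add: power2_eq_square algebra_simps)
    ultimately show ?thesis by (rule DERIV_cong)
  qed
  have Hc: "H c = 0" using c pc by (simp add: H_def)
  have zero: "J0 x = 0" if "0 < x" "x < c" for x
  proof -
    have "\<exists>z. x < z \<and> z < c \<and> H c - H x = (c - x) * (2 * z * (J0 z)^2)"
      by (rule MVT2[OF that(2)]) (rule dH)
    then obtain z where z: "x < z" "z < c" "H c - H x = (c - x) * (2 * z * (J0 z)^2)"
      by blast
    have "(c - x) * (2 * z * (J0 z)^2) \<ge> 0" using z that by auto
    then have "H x \<le> 0" using z Hc by linarith
    moreover have "H x \<ge> x^2 * (J0 x)^2" by (simp add: H_def)
    moreover have "x^2 * (J0 x)^2 \<ge> 0" by simp
    ultimately have "x^2 * (J0 x)^2 = 0" by linarith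
    then show ?thesis using that by simp
  qed
  have lim: "(\<lambda>n. J0 (c / 2 * inverse (real (Suc n)))) \<longlonglongrightarrow> J0 0"
  proof (rule isCont_tendsto_compose[OF J0_isCont])
    show "(\<lambda>n. c / 2 * inverse (real (Suc n))) \<longlonglongrightarrow> 0"
      using tendsto_mult_right_zero[OF LIMSEQ_inverse_real_of_nat, of "c/2"] by simp
  qed
  moreover have "(\<lambda>n. J0 (c / 2 * inverse (real (Suc n)))) = (\<lambda>n. 0)"
  proof
    fix n
    have "inverse (real (Suc n)) \<le> 1" by (simp add: inverse_le_1_iff)
    then have "c / 2 * inverse (real (Suc n)) \<le> c / 2" using c by (simp add: mult_left_le)
    then have "c / 2 * inverse (real (Suc n)) < c" using c by linarith
    moreover have "0 < c / 2 * inverse (real (Suc n))" using c by simp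
    ultimately show "J0 (c / 2 * inverse (real (Suc n))) = 0" using zero by blast
  qed
  ultimately have "(\<lambda>n. 0) \<longlonglongrightarrow> J0 0" by simp
  then have "J0 0 = 0" using LIMSEQ_unique[OF _ tendsto_const] by blast
  then show False by (simp add: J0_0)
qed

lemma not_limpt_zeros:
  assumes "z \<ge> 0"
  shows "\<not> z islimpt {y. J0 y = 0}"
proof
  assume lp: "z islimpt {y. J0 y = 0}"
  have cl: "closed {y. J0 y = 0}"
    by (intro closed_Collect_eq continuous_intros) (simp add: continuous_on_eq_continuous_at J0_isCont)
  have "J0 z = 0" using closed_limpt cl lp by blast
  then have zpos: "z > 0" using assms J0_0 by (cases "z = 0") auto
  have d: "(J0 has_real_derivative pp z / z) (at z)" using J0_deriv' zpos by blast
  have nz: "pp z / z \<noteq> 0" using zero_nondeg[OF zpos \<open>J0 z = 0\<close>] zpos by simp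
  obtain d where d: "d > 0" "\<forall>h>0. h < d \<longrightarrow> J0 (z + h) \<noteq> 0 \<and> J0 (z - h) \<noteq> 0"
  proof (cases "pp z / z > 0")
    case True
    obtain d1 where d1: "d1 > 0" "\<forall>h>0. h < d1 \<longrightarrow> J0 z < J0 (z + h)"
      using DERIV_pos_inc_right[OF d True] by blast
    obtain d2 where d2: "d2 > 0" "\<forall>h>0. h < d2 \<longrightarrow> J0 (z - h) < J0 z"
      using DERIV_pos_inc_left[OF d True] by blast
    show ?thesis using d1 d2 \<open>J0 z = 0\<close>
      by (intro that[of "min d1 d2"]) auto
  next
    case False
    then have neg: "pp z / z < 0" using nz by linarith
    obtain d1 where d1: "d1 > 0" "\<forall>h>0. h < d1 \<longrightarrow> J0 z > J0 (z + h)"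
      using DERIV_neg_dec_right[OF d neg] by blast
    obtain d2 where d2: "d2 > 0" "\<forall>h>0. h < d2 \<longrightarrow> J0 (z - h) > J0 z"
      using DERIV_neg_dec_left[OF d neg] by blast
    show ?thesis using d1 d2 \<open>J0 z = 0\<close>
      by (intro that[of "min d1 d2"]) auto
  qed
  from lp d(1) obtain y where y: "J0 y = 0" "y \<noteq> z" "dist y z < d"
    unfolding islimpt_approachable by blast
  show False
  proof (cases "y > z")
    case True
    then show False using d(2)[rule_format, of "y - z"] y by (auto simp: dist_real_def)
  next
    case False
    then show False using d(2)[rule_format, of "z - y"] y by (auto simp: dist_real_def)
  qed
qed

lemma finite_zeros_below: "finite {y. 0 < y \<and> y < x \<and> J0 y = 0}"
proof -
  have "finite ({0..x} \<inter> {y. J0 y = 0})"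
    by (rule finite_not_islimpt_in_compact) (use not_limpt_zeros in auto)
  then show ?thesis by (rule rev_finite_subset) auto
qed


lemma sturm:
  fixes y p :: "real \<Rightarrow> real"
  assumes a: "a > 0"
  and dy: "\<And>x. x > 0 \<Longrightarrow> (y has_real_derivative p x / x) (at x)"
  and dp: "\<And>x. x > 0 \<Longrightarrow> (p has_real_derivative - x * y x) (at x)"
  and pos: "\<And>x. a \<le> x \<Longrightarrow> x \<le> a + pi \<Longrightarrow> y x > 0"
  shows False
proof -
  define w where "w x = sin (x - a) / sqrt x" for x
  define q where "q x = cos (x - a) * sqrt x - sin (x - a) / (2 * sqrt x)" for x
  define W where "W x = p x * w x - y x * q x" for x
  have dW: "(W has_real_derivative - y x * sin (x - a) / (4 * x * sqrt x)) (at x)" if x: "x > 0" for x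
  proof -
    have sx: "sqrt x > 0" using x by simp
    have ss: "sqrt x * sqrt x = x" using x by simp
    have dsq: "(sqrt has_real_derivative inverse (sqrt x) / 2) (at x)"
      using DERIV_real_sqrt[OF x] .
    have dsin: "((\<lambda>x. sin (x - a)) has_real_derivative cos (x - a)) (at x)"
      using DERIV_chain2[OF DERIV_sin[of "x - a"] DERIV_diff[OF DERIV_ident DERIV_const[of a]]] by simp
    have dcos: "((\<lambda>x. cos (x - a)) has_real_derivative - sin (x - a)) (at x)"
      using DERIV_chain2[OF DERIV_cos[of "x - a"] DERIV_diff[OF DERIV_ident DERIV_const[of a]]] by simp
    have dw: "(w has_real_derivative q x / x) (at x)"
      unfolding w_def[abs_def]
      by (rule DERIV_cong[OF DERIV_divide[OF dsin dsq]]) (use sx ss in \<open>simp_all add: q_def field_simps\<close>)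
    have d2: "((\<lambda>x. 2 * sqrt x) has_real_derivative 2 * (inverse (sqrt x) / 2)) (at x)"
      by (rule DERIV_cmult[OF dsq])
    have dq: "(q has_real_derivative - sin (x - a) * sqrt x + sin (x - a) / (4 * x * sqrt x)) (at x)"
      unfolding q_def[abs_def]
      by (rule DERIV_cong[OF DERIV_diff[OF DERIV_mult[OF dcos dsq] DERIV_divide[OF dsin d2]]])
        (use sx ss in \<open>simp_all add: field_simps\<close>)
    have xw: "x * w x = sin (x - a) * sqrt x" unfolding w_def using sx ss
      by (simp add: field_simps)
    show ?thesis
      unfolding W_def[abs_def]
      by (rule DERIV_cong[OF DERIV_diff[OF DERIV_mult[OF dp[OF x] dw] DERIV_mult[OF dy[OF x] dq]]])
        (use x xw in \<open>simp add: algebra_simps\<close>)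
  qed
  have "\<exists>z. a < z \<and> z < a + pi \<and> W (a + pi) - W a = (a + pi - a) * (- y z * sin (z - a) / (4 * z * sqrt z))"
  proof (rule MVT2)
    show "a < a + pi" using pi_gt_zero by linarith
  next
    fix x assume "a \<le> x" "x \<le> a + pi"
    then show "(W has_real_derivative - y x * sin (x - a) / (4 * x * sqrt x)) (at x)"
      using a by (intro dW) linarith
  qed
  then obtain z where z: "a < z" "z < a + pi"
    "W (a + pi) - W a = (a + pi - a) * (- y z * sin (z - a) / (4 * z * sqrt z))" by blast
  have s: "sin (z - a) > 0" using z by (intro sin_gt_zero) auto
  have yz: "y z > 0" using z by (intro pos) auto
  have zp: "z > 0" using z a by linarith
  have "y z * sin (z - a) / (4 * z * sqrt z) > 0" using s yz zp by simp
  then have P: "0 < pi * (y z * sin (z - a) / (4 * z * sqrt z))" by (rule mult_pos_pos[OF pi_gt_zero])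
  have "W (a + pi) - W a = - (pi * (y z * sin (z - a) / (4 * z * sqrt z)))" using z(3) by simp
  then have neg: "W (a + pi) - W a < 0" using P by linarith
  have Wa: "W a = - y a * sqrt a" by (simp add: W_def w_def q_def)
  have Wb: "W (a + pi) = y (a + pi) * sqrt (a + pi)" by (simp add: W_def w_def q_def)
  have "y a > 0" "y (a + pi) > 0" using a pi_gt_zero by (auto intro!: pos)
  then have "W (a + pi) - W a > 0" unfolding Wa Wb using a pi_gt_zero
    by (simp add: add_pos_pos)
  then show False using neg by simp
qed

lemma zero_in:
  assumes a: "a > 0"
  shows "\<exists>z. a \<le> z \<and> z \<le> a + pi \<and> J0 z = 0"
proof (rule ccontr)
  assume nz: "\<not> ?thesis"
  have cont: "continuous_on {s..t} J0" for s t by (rule J0_cont)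
  have api: "a \<le> a + pi" using pi_gt_zero by linarith
  have Ja: "J0 a \<noteq> 0"
  proof
    assume "J0 a = 0"
    then have "a \<le> a \<and> a \<le> a + pi \<and> J0 a = 0" using api by simp
    then show False using nz by blast
  qed
  show False
  proof (cases "J0 a > 0")
    case True
    have "J0 x > 0" if "a \<le> x" "x \<le> a + pi" for x
    proof (rule ccontr)
      assume "\<not> J0 x > 0"
      then have "J0 x \<le> 0" by simp
      from IVT2'[of J0 x 0 a, OF this _ that(1) cont] True
      obtain z where "a \<le> z" "z \<le> x" "J0 z = 0" by auto
      then have "a \<le> z \<and> z \<le> a + pi \<and> J0 z = 0" using that by simp
      then show False using nz by blast
    qed
    then show False
      by (intro sturm[OF a, of J0 pp] J0_deriv' pp_deriv)
  next
    case False
    then have neg: "J0 a < 0" using Ja by linarith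
    have "- J0 x > 0" if "a \<le> x" "x \<le> a + pi" for x
    proof (rule ccontr)
      assume "\<not> - J0 x > 0"
      then have "0 \<le> J0 x" by simp
      from IVT'[of J0 a 0 x, OF _ this that(1) cont] neg
      obtain z where "a \<le> z" "z \<le> x" "J0 z = 0" by auto
      then have "a \<le> z \<and> z \<le> a + pi \<and> J0 z = 0" using that by simp
      then show False using nz by blast
    qed
    moreover have "((\<lambda>x. - J0 x) has_real_derivative (- pp x) / x) (at x)" if "x > 0" for x
      using DERIV_minus[OF J0_deriv'[OF that]] by simp
    moreover have "((\<lambda>x. - pp x) has_real_derivative - x * (- J0 x)) (at x)" for x
      using DERIV_minus[OF pp_deriv[of x]] by simp
    ultimately show False
      using sturm[OF a, of "\<lambda>x. - J0 x" "\<lambda>x. - pp x"] by blast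
  qed
qed

definition cnt :: "real \<Rightarrow> nat" where
  "cnt x = card {y. 0 < y \<and> y < x \<and> J0 y = 0}"

lemma unbounded_zeros: "\<exists>z. z > a \<and> J0 z = 0"
proof -
  have "0 < max a 1 + 1" by simp
  from zero_in[OF this] obtain z where "max a 1 + 1 \<le> z" "J0 z = 0" by blast
  then show ?thesis by (intro exI[of _ z]) auto
qed

lemma cnt_less:
  assumes "0 < x" "x < x'" "J0 x = 0"
  shows "cnt x < cnt x'"
  unfolding cnt_def
proof (rule psubset_card_mono[OF finite_zeros_below])
  show "{y. 0 < y \<and> y < x \<and> J0 y = 0} \<subset> {y. 0 < y \<and> y < x' \<and> J0 y = 0}"
    using assms by auto
qed

lemma exists_nth: "\<exists>x. 0 < x \<and> J0 x = 0 \<and> cnt x = n"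
proof (induction n)
  case 0
  obtain z where z: "z > 0" "J0 z = 0" using unbounded_zeros[of 0] by auto
  define S where "S = {y. 0 < y \<and> y < z + 1 \<and> J0 y = 0}"
  have fS: "finite S" unfolding S_def by (rule finite_zeros_below)
  have "z \<in> S" using z by (simp add: S_def)
  then have ne: "S \<noteq> {}" by auto
  define m where "m = Min S"
  have mS: "m \<in> S" using Min_in[OF fS ne] by (simp add: m_def)
  have E: "{y. 0 < y \<and> y < m \<and> J0 y = 0} = {}"
  proof (rule ccontr)
    assume "{y. 0 < y \<and> y < m \<and> J0 y = 0} \<noteq> {}"
    then obtain y where y: "0 < y" "y < m" "J0 y = 0" by auto
    then have "y \<in> S" using mS by (auto simp: S_def)
    then have "m \<le> y" using Min_le[OF fS] by (simp add: m_def)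
    then show False using y by simp
  qed
  then show ?case using mS by (intro exI[of _ m]) (simp add: S_def cnt_def E)
next
  case (Suc n)
  then obtain x where x: "0 < x" "J0 x = 0" "cnt x = n" by blast
  obtain z where z: "z > x" "J0 z = 0" using unbounded_zeros[of x] by auto
  define S where "S = {y. x < y \<and> y \<le> z \<and> J0 y = 0}"
  have fS: "finite S" unfolding S_def
    by (rule finite_subset[OF _ finite_zeros_below[of "z + 1"]]) (use x in auto)
  have "z \<in> S" using z by (simp add: S_def)
  then have ne: "S \<noteq> {}" by auto
  define m where "m = Min S"
  have mS: "m \<in> S" using Min_in[OF fS ne] by (simp add: m_def)
  have gap: "\<not> (x < y \<and> y < m \<and> J0 y = 0)" for y
  proof
    assume y: "x < y \<and> y < m \<and> J0 y = 0"
    then have "y \<in> S" using mS by (auto simp: S_def)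
    then have "m \<le> y" using Min_le[OF fS] by (simp add: m_def)
    then show False using y by simp
  qed
  have "{y. 0 < y \<and> y < m \<and> J0 y = 0} = insert x {y. 0 < y \<and> y < x \<and> J0 y = 0}"
    using gap mS x by (auto simp: S_def) (meson linorder_neqE_linordered_idom)
  then have "cnt m = Suc n"
    using x finite_zeros_below[of x] by (simp add: cnt_def)
  then show ?case using mS x by (intro exI[of _ m]) (auto simp: S_def)
qed

lemma besselz_props: "0 < besselz n \<and> J0 (besselz n) = 0 \<and> cnt (besselz n) = n"
proof -
  have ex: "\<exists>!x. 0 < x \<and> J0 x = 0 \<and> finite {y. 0 < y \<and> y < x \<and> J0 y = 0}
           \<and> card {y. 0 < y \<and> y < x \<and> J0 y = 0} = n"
  proof -
    obtain x where x: "0 < x" "J0 x = 0" "cnt x = n" using exists_nth by blast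
    show ?thesis
    proof (rule ex1I[of _ x])
      show "0 < x \<and> J0 x = 0 \<and> finite {y. 0 < y \<and> y < x \<and> J0 y = 0}
           \<and> card {y. 0 < y \<and> y < x \<and> J0 y = 0} = n"
        using x finite_zeros_below by (simp add: cnt_def)
    next
      fix x' assume x': "0 < x' \<and> J0 x' = 0 \<and> finite {y. 0 < y \<and> y < x' \<and> J0 y = 0}
           \<and> card {y. 0 < y \<and> y < x' \<and> J0 y = 0} = n"
      then have c': "cnt x' = n" by (simp add: cnt_def)
      show "x' = x"
      proof (rule ccontr)
        assume "x' \<noteq> x"
        then consider "x' < x" | "x < x'" by linarith
        then show False
        proof cases
          case 1 then show ?thesis using cnt_less[of x' x] x' x c' by simp
        next
          case 2 then show ?thesis using cnt_less[of x x'] x' x c' by simp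
        qed
      qed
    qed
  qed
  show ?thesis
    using theI'[OF ex] unfolding besselz_def[symmetric] by (simp add: cnt_def)
qed

lemma besselz_pos: "besselz n > 0" using besselz_props by blast
lemma besselz_zero: "J0 (besselz n) = 0" using besselz_props by blast
lemma besselz_inj: "n \<noteq> m \<Longrightarrow> besselz n \<noteq> besselz m"
  using besselz_props by metis


lemma Theta_sets [measurable]: "Theta \<in> sets lborel"
  by (simp add: Theta_def)

lemma emeasure_Theta_gt:
  "emeasure lborel (Theta \<inter> {x. c < norm x ^ 2}) = ennreal (pi * (min 1 (max 0 (1 - c))))"
proof -
  have D: "DIM(real^2) = 2" by simp
  consider "c < 0" | "0 \<le> c" "c < 1" | "1 \<le> c" by linarith
  then show ?thesis
  proof cases
    case 1
    have "c < norm x ^ 2" for x :: "real^2"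
    proof -
      have "0 \<le> norm x ^ 2" by simp
      then show ?thesis using 1 by linarith
    qed
    then have "Theta \<inter> {x. c < norm x ^ 2} = ball 0 1"
      by (auto simp: Theta_def)
    then show ?thesis using 1 emeasure_ball[of 1 "0::real^2"] by (simp add: D unit_ball_vol_2)
  next
    case 2
    have eq: "Theta \<inter> {x. c < norm x ^ 2} = ball 0 1 - cball 0 (sqrt c)"
    proof -
      have "c < norm x ^ 2 \<longleftrightarrow> sqrt c < norm x" for x :: "real^2"
      proof -
        have "sqrt (norm x ^ 2) = norm x" by simp
        then show ?thesis using real_sqrt_less_iff[of c "norm x ^ 2"] by simp
      qed
      then show ?thesis by (auto simp: Theta_def)
    qed
    have sub: "cball 0 (sqrt c) \<subseteq> ball (0::real^2) 1"
    proof
      fix x :: "real^2" assume "x \<in> cball 0 (sqrt c)"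
      then have a1: "norm x \<le> sqrt c" by simp
      have a2: "sqrt c < 1" using 2 by simp
      have "norm x < 1" using a1 a2 by linarith
      then show "x \<in> ball 0 1" by simp
    qed
    have "emeasure lborel (ball 0 1 - cball (0::real^2) (sqrt c)) =
          emeasure lborel (ball (0::real^2) 1) - emeasure lborel (cball (0::real^2) (sqrt c))"
      by (rule emeasure_Diff) (use sub 2 emeasure_cball[of "sqrt c" "0::real^2"] in auto)
    also have "\<dots> = ennreal pi - ennreal (pi * c)"
      using emeasure_ball[of 1 "0::real^2"] emeasure_cball[of "sqrt c" "0::real^2"] 2
      by (simp add: D unit_ball_vol_2)
    also have "\<dots> = ennreal (pi - pi * c)"
      using 2 by (subst ennreal_minus) auto
    finally show ?thesis using eq 2 by (simp add: algebra_simps)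
  next
    case 3
    have "norm x ^ 2 < c" if "x \<in> Theta" for x
    proof -
      have "\<bar>norm x\<bar> < 1" using that by (simp add: Theta_def)
      then have "norm x ^ 2 < 1" by (simp only: abs_square_less_1)
      then show ?thesis using 3 by linarith
    qed
    then have "Theta \<inter> {x. c < norm x ^ 2} = {}"
      by force
    then show ?thesis using 3 by simp
  qed
qed

definition NT :: "(real^2) measure" where
  "NT = density lborel (\<lambda>x. ennreal (indicator Theta x))"

definition LT :: "real measure" where
  "LT = density lborel (\<lambda>t. ennreal (pi * indicator {0..1} t))"

lemma normsq_meas [measurable]: "(\<lambda>x::real^2. norm x ^ 2) \<in> borel_measurable borel"
  by measurable

lemma distr_NT: "distr NT borel (\<lambda>x. norm x ^ 2) = LT"
proof (rule measure_eqI_lessThan)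
  show "sets (distr NT borel (\<lambda>x. norm x ^ 2)) = sets borel" by simp
  show "sets LT = sets borel" by (simp add: LT_def)
  have em: "emeasure (distr NT borel (\<lambda>x. norm x ^ 2)) {c<..} = ennreal (pi * (min 1 (max 0 (1 - c))))" for c
  proof -
    have "emeasure (distr NT borel (\<lambda>x. norm x ^ 2)) {c<..} =
          emeasure NT ((\<lambda>x. norm x ^ 2) -` {c<..} \<inter> space NT)"
      by (rule emeasure_distr) (auto simp: NT_def)
    also have "\<dots> = (\<integral>\<^sup>+ x. ennreal (indicator Theta x) * indicator ((\<lambda>x. norm x ^ 2) -` {c<..}) x \<partial>lborel)"
    proof -
      have pre: "(\<lambda>x::real^2. norm x ^ 2) -` {c<..} \<in> sets borel"
        using measurable_sets[OF normsq_meas, of "{c<..}"] by simp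
      show ?thesis unfolding NT_def by (subst emeasure_density) (use pre in auto)
    qed
    also have "\<dots> = (\<integral>\<^sup>+ x. indicator (Theta \<inter> {x. c < norm x ^ 2}) x \<partial>lborel)"
      by (intro nn_integral_cong) (auto simp: indicator_def)
    also have "\<dots> = emeasure lborel (Theta \<inter> {x. c < norm x ^ 2})"
      by (rule nn_integral_indicator) simp
    finally show ?thesis using emeasure_Theta_gt by simp
  qed
  show "emeasure (distr NT borel (\<lambda>x. norm x ^ 2)) {c<..} < \<infinity>" for c
    using em by simp
  show "emeasure (distr NT borel (\<lambda>x. norm x ^ 2)) {c<..} = emeasure LT {c<..}" for c
  proof -
    have "emeasure LT {c<..} = (\<integral>\<^sup>+ t. ennreal (pi * indicator {0..1} t) * indicator {c<..} t \<partial>lborel)"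
      unfolding LT_def by (subst emeasure_density) auto
    also have "\<dots> = (\<integral>\<^sup>+ t. ennreal pi * indicator ({0..1} \<inter> {c<..}) t \<partial>lborel)"
      by (intro nn_integral_cong) (auto simp: indicator_def)
    also have "\<dots> = ennreal pi * emeasure lborel ({0..1} \<inter> {c<..})"
      by (rule nn_integral_cmult_indicator) simp
    also have "\<dots> = ennreal (pi * (min 1 (max 0 (1 - c))))"
    proof -
      consider "c < 0" | "0 \<le> c" "c < 1" | "1 \<le> c" by linarith
      then show ?thesis
      proof cases
        case 1
        then have "{0..1} \<inter> {c<..} = {0..(1::real)}" by auto
        then show ?thesis using 1 by (simp add: ennreal_mult)
      next
        case 2
        then have "{0..1} \<inter> {c<..} = {c<..(1::real)}" by auto
        then show ?thesis using 2 by (simp add: ennreal_mult)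
      next
        case 3
        then have "{0..1} \<inter> {c<..} = ({}::real set)" by auto
        then show ?thesis using 3 by simp
      qed
    qed
    finally show ?thesis using em by simp
  qed
qed

lemma radial_integral_cont:
  fixes h :: "real \<Rightarrow> real"
  assumes h: "continuous_on UNIV h"
  shows "set_integrable lborel Theta (\<lambda>x. h (norm x ^ 2))"
    and "(LINT x:Theta|lborel. h (norm x ^ 2)) = pi * integral {0..1} h"
proof -
  have hm [measurable]: "h \<in> borel_measurable borel"
    using h by (simp add: borel_measurable_continuous_onI)
  have g1: "(\<lambda>t::real. pi * indicator {0..1} t) \<in> borel_measurable lborel" by measurable
  have g2: "AE t in lborel. 0 \<le> pi * indicator {0..1::real} t" by simp
  have g3: "(\<lambda>x::real^2. indicator Theta x :: real) \<in> borel_measurable lborel" by measurable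
  have g4: "AE x in lborel. 0 \<le> (indicator Theta x :: real)" by simp
  have hml: "h \<in> borel_measurable lborel" by simp
  have hn: "(\<lambda>x::real^2. h (norm x ^ 2)) \<in> borel_measurable lborel" by measurable
  have nm: "(\<lambda>x::real^2. norm x ^ 2) \<in> measurable NT borel"
    unfolding NT_def by measurable
  have ic: "integrable lborel (\<lambda>t. indicator {0..1} t *\<^sub>R h t)"
    by (rule borel_integrable_compact[OF compact_Icc continuous_on_subset[OF h]]) simp
  have intL: "integrable LT h"
  proof -
    have "integrable lborel (\<lambda>t. (pi * indicator {0..1} t) *\<^sub>R h t)"
      using integrable_mult_right[OF ic, of pi] by (simp add: mult_ac)
    then show ?thesis unfolding LT_def using integrable_density[OF hml g1 g2] by simp
  qed
  have intN: "integrable NT (\<lambda>x. h (norm x ^ 2))"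
    using intL integrable_distr_eq[OF nm hm] unfolding distr_NT by simp
  show si: "set_integrable lborel Theta (\<lambda>x. h (norm x ^ 2))"
    using intN integrable_density[OF hn g3 g4] unfolding NT_def set_integrable_def by simp
  have "(LINT x:Theta|lborel. h (norm x ^ 2)) = integral\<^sup>L NT (\<lambda>x. h (norm x ^ 2))"
    unfolding NT_def set_lebesgue_integral_def using integral_density[OF hn g3 g4] by simp
  also have "\<dots> = integral\<^sup>L LT h"
    using integral_distr[OF nm hm] unfolding distr_NT by simp
  also have "\<dots> = (LINT t|lborel. (pi * indicator {0..1} t) *\<^sub>R h t)"
    unfolding LT_def using integral_density[OF hml g1 g2] by simp
  also have "\<dots> = pi * (LINT t:{0..1}|lborel. h t)"
    unfolding set_lebesgue_integral_def by (simp add: mult_ac)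
  also have "(LINT t:{0..1}|lborel. h t) = integral {0..1} h"
    by (rule set_borel_integral_eq_integral(2)) (use ic in \<open>simp add: set_integrable_def\<close>)
  finally show "(LINT x:Theta|lborel. h (norm x ^ 2)) = pi * integral {0..1} h" .
qed

definition clamp01 :: "real \<Rightarrow> real" where "clamp01 t = max 0 (min 1 t)"

lemma radial_integral:
  fixes h :: "real \<Rightarrow> real"
  assumes h: "continuous_on {0..1} h"
  shows "set_integrable lborel Theta (\<lambda>x. h (norm x ^ 2))"
    and "(LINT x:Theta|lborel. h (norm x ^ 2)) = pi * integral {0..1} h"
proof -
  define h' where "h' = h \<circ> clamp01"
  have c: "continuous_on UNIV h'"
    unfolding h'_def clamp01_def
    by (rule continuous_on_compose[OF _ continuous_on_subset[OF h]]) (auto intro!: continuous_intros)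
  have eqT: "h' (norm x ^ 2) = h (norm x ^ 2)" if "x \<in> Theta" for x
  proof -
    have "norm x < 1" using that by (simp add: Theta_def)
    then have "norm x ^ 2 \<le> 1" by (simp add: power_le_one)
    then show ?thesis by (simp add: h'_def clamp01_def)
  qed
  have eqI: "integral {0..1} h' = integral {0..1} h"
    by (rule integral_cong) (simp add: h'_def clamp01_def)
  show "set_integrable lborel Theta (\<lambda>x. h (norm x ^ 2))"
  proof -
    have "set_integrable lborel Theta (\<lambda>x. h' (norm x ^ 2)) = set_integrable lborel Theta (\<lambda>x. h (norm x ^ 2))"
      by (rule set_integrable_cong) (auto simp: eqT)
    then show ?thesis using radial_integral_cont(1)[OF c] by simp
  qed
  have "(LINT x:Theta|lborel. h (norm x ^ 2)) = (LINT x:Theta|lborel. h' (norm x ^ 2))"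
    by (rule set_lebesgue_integral_cong) (auto simp: eqT Theta_def)
  then show "(LINT x:Theta|lborel. h (norm x ^ 2)) = pi * integral {0..1} h"
    using radial_integral_cont(2)[OF c] eqI by simp
qed


definition ip :: "(real \<Rightarrow> real) \<Rightarrow> (real \<Rightarrow> real) \<Rightarrow> real" where
  "ip f g = integral {0..1} (\<lambda>t. f t * g t)"

lemma int_prod:
  fixes f g :: "real \<Rightarrow> real"
  assumes "continuous_on {0..1} f" "continuous_on {0..1} g"
  shows "(\<lambda>t. f t * g t) integrable_on {0..1::real}"
  by (rule integrable_continuous_interval) (intro continuous_intros assms)

lemma ip_comm: "ip f g = ip g f"
  unfolding ip_def by (simp add: mult.commute)

lemma ip_sum_right:
  fixes e :: "nat \<Rightarrow> real \<Rightarrow> real" and M :: nat and f :: "real \<Rightarrow> real"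
  assumes cf: "continuous_on {0..1} f" and ce: "\<And>n. continuous_on {0..1} (e n)"
  shows "ip f (\<lambda>t. \<Sum>n<M. c n * e n t) = (\<Sum>n<M. c n * ip f (e n))"
proof -
  have "ip f (\<lambda>t. \<Sum>n<M. c n * e n t) = integral {0..1} (\<lambda>t. \<Sum>n<M. c n * (f t * e n t))"
    unfolding ip_def by (simp add: sum_distrib_left mult_ac)
  also have "\<dots> = (\<Sum>n<M. integral {0..1} (\<lambda>t. c n * (f t * e n t)))"
  proof (rule Henstock_Kurzweil_Integration.integral_sum)
    fix n
    show "(\<lambda>t. c n * (f t * e n t)) integrable_on {0..1}"
      by (rule integrable_on_mult_right[OF int_prod[OF cf ce[of n]]])
  qed simp
  also have "\<dots> = (\<Sum>n<M. c n * ip f (e n))"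
    unfolding ip_def by simp
  finally show ?thesis .
qed

lemma bessel_abstract:
  fixes e :: "nat \<Rightarrow> real \<Rightarrow> real" and u :: "real \<Rightarrow> real"
  assumes ce: "\<And>n. continuous_on {0..1} (e n)" and cu: "continuous_on {0..1} u"
  and orth: "\<And>n m. n \<noteq> m \<Longrightarrow> ip (e n) (e m) = 0"
  and nrm: "\<And>n. ip (e n) (e n) \<le> 1"
  shows "(\<Sum>n<M. (ip u (e n))^2) \<le> ip u u"
proof -
  define c where "c n = ip u (e n)" for n
  define S where "S t = (\<Sum>n<M. c n * e n t)" for t
  have cS: "continuous_on {0..1} S"
    unfolding S_def by (intro continuous_intros ce)
  have uS: "ip u S = (\<Sum>n<M. c n * c n)"
    unfolding S_def[abs_def] using ip_sum_right[OF cu ce] by (simp add: c_def)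
  have Se: "ip S (e m) = c m * ip (e m) (e m)" if "m < M" for m
  proof -
    have "ip S (e m) = ip (e m) S" by (rule ip_comm)
    also have "\<dots> = (\<Sum>n<M. c n * ip (e m) (e n))"
      unfolding S_def[abs_def] by (rule ip_sum_right[OF ce ce])
    also have "\<dots> = (\<Sum>n<M. if n = m then c m * ip (e m) (e m) else 0)"
      by (rule sum.cong) (auto simp: orth)
    also have "\<dots> = c m * ip (e m) (e m)" using that by simp
    finally show ?thesis .
  qed
  have SS: "ip S S = (\<Sum>m<M. c m * (c m * ip (e m) (e m)))"
  proof -
    have "ip S S = (\<Sum>m<M. c m * ip S (e m))"
      using ip_sum_right[OF cS ce, where M=M and c=c] unfolding S_def[abs_def] by simp
    also have "\<dots> = (\<Sum>m<M. c m * (c m * ip (e m) (e m)))"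
      by (rule sum.cong) (auto simp: Se)
    finally show ?thesis .
  qed
  have SSle: "ip S S \<le> (\<Sum>m<M. c m * c m)"
    unfolding SS
  proof (rule sum_mono)
    fix m
    have "c m * c m * ip (e m) (e m) \<le> c m * c m * 1"
      by (rule mult_left_mono[OF nrm]) simp
    then show "c m * (c m * ip (e m) (e m)) \<le> c m * c m" by (simp add: mult_ac)
  qed
  have i1: "(\<lambda>t. u t * u t) integrable_on {0..1}" by (rule int_prod[OF cu cu])
  have i2: "(\<lambda>t. u t * S t) integrable_on {0..1}" by (rule int_prod[OF cu cS])
  have i3: "(\<lambda>t. S t * S t) integrable_on {0..1}" by (rule int_prod[OF cS cS])
  have "0 \<le> integral {0..1} (\<lambda>t. (u t - S t) * (u t - S t))"
    by (rule integral_nonneg) (auto intro!: int_prod continuous_intros cu cS)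
  also have "integral {0..1} (\<lambda>t. (u t - S t) * (u t - S t))
      = integral {0..1} (\<lambda>t. u t * u t + S t * S t - 2 * (u t * S t))"
    by (rule integral_cong) (simp add: algebra_simps)
  also have "\<dots> = ip u u + ip S S - 2 * ip u S"
    unfolding ip_def
    using i1 i2 i3
    by (simp add: Henstock_Kurzweil_Integration.integral_diff Henstock_Kurzweil_Integration.integral_add
        integrable_add integrable_on_mult_right)
  finally have "0 \<le> ip u u + ip S S - 2 * ip u S" .
  then show ?thesis using SSle uS unfolding c_def by (simp add: power2_eq_square)
qed


lemma FFa_deriv: "((\<lambda>t. FF (a * t)) has_real_derivative FD (a * t) * a) (at t)"
  by (rule DERIV_chain2[OF FF_deriv]) (auto intro!: derivative_eq_intros)

lemma GGa_deriv: "((\<lambda>t. GG (a * t)) has_real_derivative - FF (a * t) * a) (at t)"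
  by (rule DERIV_chain2[OF GG_deriv]) (auto intro!: derivative_eq_intros)

lemma FFa_cont: "continuous_on S (\<lambda>t. FF (a * t))"
  by (rule continuous_on_compose2[OF FF_cont[of UNIV]]) (auto intro!: continuous_intros)

lemma ftc01:
  fixes \<Phi> \<Phi>' :: "real \<Rightarrow> real"
  assumes "\<And>t. (\<Phi> has_real_derivative \<Phi>' t) (at t)"
  shows "(\<Phi>' has_integral (\<Phi> 1 - \<Phi> 0)) {0..1}"
proof (rule fundamental_theorem_of_calculus)
  fix x :: real
  have "(\<Phi> has_real_derivative \<Phi>' x) (at x within {0..1})" by (rule has_field_derivative_at_within[OF assms])
  then show "(\<Phi> has_vector_derivative \<Phi>' x) (at x within {0..1})"
    by (simp add: has_real_derivative_iff_has_vector_derivative)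
qed simp

lemma ortho_1d:
  assumes ab: "a \<noteq> b" and Fa: "FF a = 0" and Fb: "FF b = 0"
  shows "integral {0..1} (\<lambda>t. FF (a * t) * FF (b * t)) = 0"
proof -
  define \<Phi> where "\<Phi> t = FF (a * t) * GG (b * t) - GG (a * t) * FF (b * t)" for t
  have d: "(\<Phi> has_real_derivative (a - b) * (FF (a * t) * FF (b * t))) (at t)" for t
    unfolding \<Phi>_def[abs_def]
    by (rule DERIV_cong[OF DERIV_diff[OF DERIV_mult[OF FFa_deriv GGa_deriv] DERIV_mult[OF GGa_deriv FFa_deriv]]])
      (simp add: GG_eq algebra_simps)
  have "((\<lambda>t. (a - b) * (FF (a * t) * FF (b * t))) has_integral (\<Phi> 1 - \<Phi> 0)) {0..1}"
    by (rule ftc01[OF d])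
  moreover have "\<Phi> 1 - \<Phi> 0 = 0" by (simp add: \<Phi>_def Fa Fb)
  ultimately have hi: "((\<lambda>t. (a - b) * (FF (a * t) * FF (b * t))) has_integral 0) {0..1}"
    by simp
  have "integral {0..1} (\<lambda>t. (a - b) * (FF (a * t) * FF (b * t))) = 0"
    by (rule integral_unique[OF hi])
  then have "(a - b) * integral {0..1} (\<lambda>t. FF (a * t) * FF (b * t)) = 0" by simp
  then show ?thesis using ab by simp
qed

lemma ibp_1d:
  fixes \<psi> \<psi>d P Lp :: "real \<Rightarrow> real"
  assumes Fa: "FF a = 0" and p1: "\<psi> 1 = 0"
  and d\<psi>: "\<And>t. (\<psi> has_real_derivative \<psi>d t) (at t)"
  and dP: "\<And>t. (P has_real_derivative Lp t) (at t)"
  and Pe: "\<And>t. P t = t * \<psi>d t"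
  and cL: "continuous_on {0..1} Lp"
  shows "integral {0..1} (\<lambda>t. FF (a * t) * Lp t) = - a * integral {0..1} (\<lambda>t. FF (a * t) * \<psi> t)"
proof -
  define \<Phi> where "\<Phi> t = FF (a * t) * P t - GG (a * t) * \<psi> t" for t
  have d: "(\<Phi> has_real_derivative (FF (a * t) * Lp t + a * (FF (a * t) * \<psi> t))) (at t)" for t
    unfolding \<Phi>_def[abs_def]
    by (rule DERIV_cong[OF DERIV_diff[OF DERIV_mult[OF FFa_deriv dP] DERIV_mult[OF GGa_deriv d\<psi>]]])
      (simp add: GG_eq Pe algebra_simps)
  have "((\<lambda>t. FF (a * t) * Lp t + a * (FF (a * t) * \<psi> t)) has_integral (\<Phi> 1 - \<Phi> 0)) {0..1}"
    by (rule ftc01[OF d])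
  moreover have "\<Phi> 1 - \<Phi> 0 = 0" by (simp add: \<Phi>_def Fa p1 Pe GG_0)
  ultimately have hi: "((\<lambda>t. FF (a * t) * Lp t + a * (FF (a * t) * \<psi> t)) has_integral 0) {0..1}"
    by simp
  have I: "integral {0..1} (\<lambda>t. FF (a * t) * Lp t + a * (FF (a * t) * \<psi> t)) = 0"
    by (rule integral_unique[OF hi])
  have c\<psi>: "continuous_on {0..1} \<psi>"
    using d\<psi> by (meson DERIV_continuous continuous_at_imp_continuous_on)
  have i1: "(\<lambda>t. FF (a * t) * Lp t) integrable_on {0..1}"
    by (rule int_prod[OF FFa_cont cL])
  have i2: "(\<lambda>t. a * (FF (a * t) * \<psi> t)) integrable_on {0..1}"
    by (rule integrable_on_mult_right[OF int_prod[OF FFa_cont c\<psi>]])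
  have "integral {0..1} (\<lambda>t. FF (a * t) * Lp t) + a * integral {0..1} (\<lambda>t. FF (a * t) * \<psi> t) = 0"
    using I Henstock_Kurzweil_Integration.integral_add[OF i1 i2] by simp
  then show ?thesis by linarith
qed


definition al :: "nat \<Rightarrow> real" where "al n = (besselz n)^2 / 4"
definition Nn :: "nat \<Rightarrow> real" where
  "Nn n = (LINT x:Theta|lborel. (J0 (besselz n * norm x))^2)"
definition eh :: "nat \<Rightarrow> real \<Rightarrow> real" where
  "eh n t = (sqrt pi / sqrt (Nn n)) * FF (al n * t)"

lemma J0_scaled: "J0 (z * r) = FF (z^2 / 4 * r^2)"
  by (simp add: J0_FF power_mult_distrib)

lemma eigen_eq: "eigen n (norm x) = (1 / sqrt (Nn n)) * FF (al n * norm x ^ 2)"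
  unfolding eigen_def Nn_def al_def J0_scaled by simp

lemma FF_al: "FF (al n) = 0"
  using besselz_zero[of n] by (simp add: J0_FF al_def)

lemma al_inj: "n \<noteq> m \<Longrightarrow> al n \<noteq> al m"
proof
  assume nm: "n \<noteq> m" and eq: "al n = al m"
  then have "(besselz n)^2 = (besselz m)^2" by (simp add: al_def)
  then have "besselz n = besselz m"
    using besselz_pos[of n] besselz_pos[of m] by (simp add: power2_eq_iff_nonneg)
  then show False using besselz_inj[OF nm] by simp
qed

lemma cont_FFal: "continuous_on UNIV (\<lambda>t. FF (al n * t))"
  by (rule FFa_cont)

lemma Nn_eq: "Nn n = pi * integral {0..1} (\<lambda>t. FF (al n * t) * FF (al n * t))"
proof -
  have "Nn n = (LINT x:Theta|lborel. (\<lambda>t. FF (al n * t) * FF (al n * t)) (norm x ^ 2))"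
    unfolding Nn_def J0_scaled al_def by (simp add: power2_eq_square)
  also have "\<dots> = pi * integral {0..1} (\<lambda>t. FF (al n * t) * FF (al n * t))"
    by (rule radial_integral_cont(2)) (rule continuous_on_mult[OF FFa_cont FFa_cont])
  finally show ?thesis .
qed

lemma eh_cont: "continuous_on {0..1} (eh n)"
  unfolding eh_def[abs_def] by (intro continuous_intros FFa_cont)

lemma eh_orth: "n \<noteq> m \<Longrightarrow> ip (eh n) (eh m) = 0"
proof -
  assume nm: "n \<noteq> m"
  have "ip (eh n) (eh m) = integral {0..1} (\<lambda>t. (pi / (sqrt (Nn n) * sqrt (Nn m))) * (FF (al n * t) * FF (al m * t)))"
    unfolding ip_def eh_def by (rule integral_cong) (simp add: field_simps)
  also have "\<dots> = 0"
    using ortho_1d[OF al_inj[OF nm] FF_al FF_al] by simp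
  finally show ?thesis .
qed

lemma eh_nrm: "ip (eh n) (eh n) \<le> 1"
proof -
  have "ip (eh n) (eh n) = integral {0..1} (\<lambda>t. (pi / (sqrt (Nn n) * sqrt (Nn n))) * (FF (al n * t) * FF (al n * t)))"
    unfolding ip_def eh_def by (rule integral_cong) (simp add: field_simps)
  also have "\<dots> = (pi / (sqrt (Nn n) * sqrt (Nn n))) * integral {0..1} (\<lambda>t. FF (al n * t) * FF (al n * t))"
    by simp
  also have "\<dots> = Nn n / (sqrt (Nn n) * sqrt (Nn n))"
    by (simp add: Nn_eq)
  also have "\<dots> \<le> 1"
  proof (cases "Nn n = 0")
    case True then show ?thesis by simp
  next
    case False
    have "Nn n \<ge> 0" unfolding Nn_def set_lebesgue_integral_def
      by (rule Bochner_Integration.integral_nonneg) (simp add: indicator_def)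
    then have "sqrt (Nn n) * sqrt (Nn n) = Nn n" by simp
    then show ?thesis using False by simp
  qed
  finally show ?thesis .
qed

lemma coef_radial:
  fixes \<psi> :: "real \<Rightarrow> real"
  assumes c\<psi>: "continuous_on UNIV \<psi>"
  shows "coef n (\<lambda>x. complex_of_real (\<psi> (norm x ^ 2))) = complex_of_real (sqrt pi * ip \<psi> (eh n))"
proof -
  have "coef n (\<lambda>x. complex_of_real (\<psi> (norm x ^ 2)))
      = (LINT x:Theta|lborel. complex_of_real ((\<lambda>t. (1 / sqrt (Nn n)) * FF (al n * t) * \<psi> t) (norm x ^ 2)))"
    unfolding coef_def eigen_eq by (simp add: scaleR_conv_of_real)
  also have "\<dots> = complex_of_real (LINT x:Theta|lborel. (\<lambda>t. (1 / sqrt (Nn n)) * FF (al n * t) * \<psi> t) (norm x ^ 2))"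
    by (rule set_integral_complex_of_real)
  also have "(LINT x:Theta|lborel. (\<lambda>t. (1 / sqrt (Nn n)) * FF (al n * t) * \<psi> t) (norm x ^ 2))
       = pi * integral {0..1} (\<lambda>t. (1 / sqrt (Nn n)) * FF (al n * t) * \<psi> t)"
    by (rule radial_integral_cont(2)) (intro continuous_intros FFa_cont c\<psi>)
  also have "\<dots> = sqrt pi * ip \<psi> (eh n)"
  proof -
    have "ip \<psi> (eh n) = integral {0..1} (\<lambda>t. sqrt pi * (FF (al n * t) / sqrt (Nn n) * \<psi> t))"
      unfolding ip_def eh_def by (rule integral_cong) (simp add: field_simps)
    also have "\<dots> = sqrt pi * integral {0..1} (\<lambda>t. (1 / sqrt (Nn n)) * FF (al n * t) * \<psi> t)" by simp
    finally have "sqrt pi * ip \<psi> (eh n) = (sqrt pi * sqrt pi) * integral {0..1} (\<lambda>t. (1 / sqrt (Nn n)) * FF (al n * t) * \<psi> t)"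
      by simp
    then show ?thesis by simp
  qed
  finally show ?thesis .
qed

lemma coef_sq:
  fixes \<psi> :: "real \<Rightarrow> real"
  assumes c\<psi>: "continuous_on UNIV \<psi>"
  shows "(cmod (coef n (\<lambda>x. complex_of_real (\<psi> (norm x ^ 2)))))^2 = pi * (ip \<psi> (eh n))^2"
  unfolding coef_radial[OF c\<psi>] norm_of_real by (simp add: power_mult_distrib)

lemma bessel_radial:
  fixes \<psi> :: "real \<Rightarrow> real"
  assumes c\<psi>: "continuous_on UNIV \<psi>"
  shows "summable (\<lambda>n. (cmod (coef n (\<lambda>x. complex_of_real (\<psi> (norm x ^ 2)))))^2)"
    and "(\<Sum>n. (cmod (coef n (\<lambda>x. complex_of_real (\<psi> (norm x ^ 2)))))^2) \<le> pi * ip \<psi> \<psi>"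
proof -
  have c01: "continuous_on {0..1} \<psi>" using continuous_on_subset[OF c\<psi>] by simp
  have B: "(\<Sum>n<M. (ip \<psi> (eh n))^2) \<le> ip \<psi> \<psi>" for M
    by (rule bessel_abstract[OF eh_cont c01 eh_orth eh_nrm])
  have P: "(\<Sum>n<M. (cmod (coef n (\<lambda>x. complex_of_real (\<psi> (norm x ^ 2)))))^2) \<le> pi * ip \<psi> \<psi>" for M
    unfolding coef_sq[OF c\<psi>] sum_distrib_left[symmetric]
    using B[of M] by (simp add: mult_left_mono)
  show s: "summable (\<lambda>n. (cmod (coef n (\<lambda>x. complex_of_real (\<psi> (norm x ^ 2)))))^2)"
  proof (rule bounded_imp_summable)
    fix n
    show "(\<Sum>k\<le>n. (cmod (coef k (\<lambda>x. complex_of_real (\<psi> (norm x ^ 2)))))^2) \<le> pi * ip \<psi> \<psi>"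
      using P[of "Suc n"] by (simp add: lessThan_Suc_atMost)
  qed simp
  show "(\<Sum>n. (cmod (coef n (\<lambda>x. complex_of_real (\<psi> (norm x ^ 2)))))^2) \<le> pi * ip \<psi> \<psi>"
    by (rule suminf_le_const[OF s P])
qed


lemma dpow: "((\<lambda>t::real. (1 - t)^(Suc n)) has_real_derivative - real (Suc n) * (1 - t)^n) (at t)"
proof -
  have "((\<lambda>t::real. (1 - t)^(Suc n)) has_real_derivative real (Suc n) * (1 - t)^(Suc n - Suc 0) * (0 - 1)) (at t)"
    by (rule DERIV_chain2[OF DERIV_pow DERIV_diff[OF DERIV_const DERIV_ident]])
  then show ?thesis by (rule DERIV_cong) (simp add: algebra_simps)
qed

lemma has_int_pow: "((\<lambda>t::real. (1 - t)^j) has_integral (1 / (real j + 1))) {0..1}"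
proof -
  have d: "((\<lambda>t. - (1 / (real j + 1)) * (1 - t)^(Suc j)) has_real_derivative (1 - t)^j) (at t)" for t :: real
    by (rule DERIV_cong[OF DERIV_cmult[OF dpow]]) (simp add: field_simps)
  have "((\<lambda>t::real. (1 - t)^j) has_integral ((- (1 / (real j + 1)) * (1 - 1)^(Suc j)) - (- (1 / (real j + 1)) * (1 - 0)^(Suc j)))) {0..1}"
  proof (rule fundamental_theorem_of_calculus)
    fix x :: real
    show "((\<lambda>t. - (1 / (real j + 1)) * (1 - t)^(Suc j)) has_vector_derivative (1 - x)^j) (at x within {0..1})"
      using has_field_derivative_at_within[OF d[of x]] by (simp add: has_real_derivative_iff_has_vector_derivative)
  qed simp
  then show ?thesis by simp
qed

lemma has_int_powr:
  assumes q: "q > 0"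
  shows "((\<lambda>t::real. (1 - t) powr q) has_integral (1 / (q + 1))) {0..1}"
proof -
  define \<Phi> where "\<Phi> t = - (1 / (q + 1)) * ((1 - t) powr (q + 1))" for t :: real
  have "((\<lambda>t::real. (1 - t) powr q) has_integral (\<Phi> 1 - \<Phi> 0)) {0..1}"
  proof (rule fundamental_theorem_of_calculus_interior)
    show "continuous_on {0..1} \<Phi>" unfolding \<Phi>_def
      by (intro continuous_intros continuous_on_powr') (use q in auto)
  next
    fix x :: real assume x: "x \<in> {0<..<1}"
    have d0: "((\<lambda>t. (1 - t) powr (q + 1)) has_real_derivative (q + 1) * (1 - x) powr (q + 1 - 1) * (0 - 1)) (at x)"
      by (rule DERIV_chain2[OF has_real_derivative_powr DERIV_diff[OF DERIV_const DERIV_ident]]) (use x in simp)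
    have "(\<Phi> has_real_derivative (1 - x) powr q) (at x)" unfolding \<Phi>_def
      by (rule DERIV_cong[OF DERIV_cmult[OF d0]]) (use q in \<open>simp add: field_simps\<close>)
    then show "(\<Phi> has_vector_derivative (1 - x) powr q) (at x)"
      by (simp add: has_real_derivative_iff_has_vector_derivative)
  qed simp
  then show ?thesis by (simp add: \<Phi>_def)
qed

definition psi :: "nat \<Rightarrow> real \<Rightarrow> real" where "psi k t = (1 - t)^(k+2)"
definition psid :: "nat \<Rightarrow> real \<Rightarrow> real" where "psid k t = - (real k + 2) * (1 - t)^(k+1)"
definition Pk :: "nat \<Rightarrow> real \<Rightarrow> real" where "Pk k t = t * psid k t"
definition Lp :: "nat \<Rightarrow> real \<Rightarrow> real" where
  "Lp k t = - (real k + 2) * (1 - t)^(k+1) + (real k + 2) * (real k + 1) * t * (1 - t)^k"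

lemma psi_deriv: "(psi k has_real_derivative psid k t) (at t)"
proof -
  have e: "psi k = (\<lambda>t. (1 - t)^(Suc (Suc k)))" unfolding psi_def by (rule ext) simp
  show ?thesis unfolding e
    by (rule DERIV_cong[OF dpow]) (simp add: psid_def)
qed

lemma Pk_deriv: "(Pk k has_real_derivative Lp k t) (at t)"
proof -
  have e: "Pk k = (\<lambda>t. t * (- (real k + 2) * (1 - t)^(Suc k)))" unfolding Pk_def psid_def by (rule ext) simp
  show ?thesis unfolding e
    by (rule DERIV_cong[OF DERIV_mult[OF DERIV_ident DERIV_cmult[OF dpow]]]) (simp add: Lp_def algebra_simps)
qed

lemma psi_cont: "continuous_on S (psi k)"
  unfolding psi_def[abs_def] by (intro continuous_intros)
lemma Lp_cont: "continuous_on S (Lp k)"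
  unfolding Lp_def[abs_def] by (intro continuous_intros)

lemma ip_psi: "ip (psi k) (psi k) = 1 / (2 * real k + 5)"
proof -
  have "ip (psi k) (psi k) = integral {0..1} (\<lambda>t::real. (1 - t)^(2*k+4))"
    unfolding ip_def
  proof (rule integral_cong)
    fix t :: real
    have "2*k+4 = (k+2) + (k+2)" by simp
    then show "psi k t * psi k t = (1 - t)^(2*k+4)" unfolding psi_def by (metis power_add)
  qed
  also have "\<dots> = 1 / (real (2*k+4) + 1)" by (rule integral_unique[OF has_int_pow])
  finally show ?thesis by simp
qed

lemma frac3: fixes x :: real assumes "x \<ge> 0"
  shows "1/(x+1) - 2*(1/(x+2)) + 1/(x+3) = 2/((x+1)*(x+2)*(x+3))"
proof -
  have a: "x+1 \<noteq> 0" "x+2 \<noteq> 0" "x+3 \<noteq> 0" using assms by auto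
  have "1/(x+1) - 2*(1/(x+2)) + 1/(x+3) - 2/((x+1)*(x+2)*(x+3)) = 
    ((x+2)*(x+3) - 2*(x+1)*(x+3) + (x+1)*(x+2) - 2) / ((x+1)*(x+2)*(x+3))"
    using a by (simp add: divide_simps) (simp add: algebra_simps)
  also have "(x+2)*(x+3) - 2*(x+1)*(x+3) + (x+1)*(x+2) - 2 = 0" by (simp add: algebra_simps)
  finally show ?thesis by simp
qed

lemma ip_Lp: "ip (Lp k) (Lp k) \<le> 24 * (real k + 2)"
proof -
  define m where "m = real k + 2"
  define g where "g t = 2 * m^2 * (m^2 * ((1 - t)^(2*k) - 2 * (1 - t)^(2*k+1) + (1 - t)^(2*k+2)) + (1 - t)^(2*k))" for t :: real
  have Lpf: "Lp k t = m * (1 - t)^k * (m * t - 1)" for t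
    unfolding Lp_def m_def by (simp add: field_simps power_add)
  have le: "Lp k t * Lp k t \<le> g t" for t
  proof -
    have "Lp k t * Lp k t = m^2 * ((1 - t)^k)^2 * (m * t - 1)^2"
      unfolding Lpf by (simp add: power2_eq_square algebra_simps)
    also have "\<dots> \<le> m^2 * ((1 - t)^k)^2 * (2 * (m^2 * t^2 + 1))"
    proof (rule mult_left_mono)
      have "0 \<le> (m * t + 1)^2" by simp
      then show "(m * t - 1)^2 \<le> 2 * (m^2 * t^2 + 1)" by (simp add: power2_eq_square algebra_simps)
    qed simp
    also have "\<dots> = g t"
    proof -
      have "t^2 * ((1 - t)^k)^2 = (1 - t)^(2*k) - 2 * (1 - t)^(2*k+1) + (1 - t)^(2*k+2)"
      proof -
        have "t^2 = (1 - (1 - t))^2" by simp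
        then have "t^2 * ((1 - t)^k)^2 = (1 - (1 - t))^2 * (1 - t)^(2*k)"
          by (simp add: power_mult[symmetric] mult.commute)
        also have "\<dots> = (1 - t)^(2*k) - 2 * (1 - t)^(2*k+1) + (1 - t)^(2*k+2)"
          by (simp add: power2_eq_square algebra_simps power_add)
        finally show ?thesis .
      qed
      moreover have "((1 - t)^k)^2 = (1 - t)^(2*k)" by (simp add: power_mult[symmetric] mult.commute)
      ultimately show ?thesis unfolding g_def by (simp add: algebra_simps)
    qed
    finally show ?thesis .
  qed
  define j where "j = real (2*k)"
  have h0: "((\<lambda>t::real. (1 - t)^(2*k)) has_integral (1 / (j + 1))) {0..1}"
    using has_int_pow[of "2*k"] by (simp add: j_def)
  have h1: "((\<lambda>t::real. (1 - t)^(2*k+1)) has_integral (1 / (j + 2))) {0..1}"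
  proof -
    have e: "real (2*k+1) + 1 = j + 2" by (simp add: j_def)
    show ?thesis using has_int_pow[of "2*k+1"] unfolding e .
  qed
  have h2: "((\<lambda>t::real. (1 - t)^(2*k+2)) has_integral (1 / (j + 3))) {0..1}"
  proof -
    have e: "real (2*k+2) + 1 = j + 3" by (simp add: j_def)
    show ?thesis using has_int_pow[of "2*k+2"] unfolding e .
  qed
  have hg: "(g has_integral (2 * m^2 * (m^2 * (1 / (j + 1) - 2 * (1 / (j + 2)) + 1 / (j + 3)) + 1 / (j + 1)))) {0..1}"
    unfolding g_def[abs_def]
    by (intro has_integral_mult_right has_integral_add has_integral_diff h0 h1 h2)
  have "ip (Lp k) (Lp k) \<le> 2 * m^2 * (m^2 * (1 / (j + 1) - 2 * (1 / (j + 2)) + 1 / (j + 3)) + 1 / (j + 1))"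
    unfolding ip_def
    by (rule has_integral_le[OF integrable_integral[OF int_prod[OF Lp_cont Lp_cont]] hg]) (use le in auto)
  also have "\<dots> \<le> 24 * m"
  proof -
    have j0: "j \<ge> 0" by (simp add: j_def)
    have jm: "j = 2 * m - 4" by (simp add: j_def m_def)
    have m2: "m \<ge> 2" by (simp add: m_def)
    have e: "1 / (j + 1) - 2 * (1 / (j + 2)) + 1 / (j + 3) = 2 / ((j + 1) * (j + 2) * (j + 3))"
      by (rule frac3[OF j0])
    have a: "m^2 * (2 / ((j + 1) * (j + 2) * (j + 3))) \<le> 2 / (j + 1)"
    proof -
      have e1: "(j + 2) * (j + 3) - m^2 = 3 * m * (m - 2) + 2" unfolding jm by (simp add: power2_eq_square algebra_simps)
      have "3 * m * (m - 2) \<ge> 0" using m2 by simp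
      then have "m^2 \<le> (j + 2) * (j + 3)" using e1 by linarith
      moreover have D: "(j + 2) * (j + 3) > 0" using j0 by simp
      ultimately have r: "m^2 / ((j + 2) * (j + 3)) \<le> 1" by (simp add: divide_le_eq)
      have "m^2 * (2 / ((j + 1) * (j + 2) * (j + 3))) = (2 / (j + 1)) * (m^2 / ((j + 2) * (j + 3)))"
        by (simp add: mult_ac)
      also have "\<dots> \<le> (2 / (j + 1)) * 1"
        by (rule mult_left_mono[OF r]) (use j0 in simp)
      finally show ?thesis by simp
    qed
    have "2 * m^2 * (m^2 * (1 / (j + 1) - 2 * (1 / (j + 2)) + 1 / (j + 3)) + 1 / (j + 1))
        \<le> 2 * m^2 * (2 / (j + 1) + 1 / (j + 1))"
      unfolding e using a by (intro mult_left_mono) auto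
    also have "\<dots> = 6 * m^2 / (j + 1)" by (simp add: field_simps)
    also have "\<dots> \<le> 24 * m"
    proof -
      have e1: "24 * m * (j + 1) - 6 * m^2 = 6 * m * (7 * m - 12)" unfolding jm by (simp add: power2_eq_square algebra_simps)
      have "6 * m * (7 * m - 12) \<ge> 0" using m2 by simp
      then have "6 * m^2 \<le> 24 * m * (j + 1)" using e1 by linarith
      then show ?thesis using j0 by (simp add: field_simps)
    qed
    finally show ?thesis .
  qed
  finally show ?thesis by (simp add: m_def)
qed


lemma L2_rad_radial:
  fixes \<psi> :: "real \<Rightarrow> real"
  assumes c\<psi>: "continuous_on UNIV \<psi>"
  shows "(\<lambda>x. complex_of_real (\<psi> (norm x ^ 2))) \<in> L2_rad"
proof -
  have hm [measurable]: "\<psi> \<in> borel_measurable borel"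
    using c\<psi> by (simp add: borel_measurable_continuous_onI)
  have m: "set_borel_measurable lborel Theta (\<lambda>x. complex_of_real (\<psi> (norm x ^ 2)))"
    unfolding set_borel_measurable_def by measurable
  have "set_integrable lborel Theta (\<lambda>x. (\<lambda>t. \<psi> t * \<psi> t) (norm x ^ 2))"
    by (rule radial_integral_cont(1)) (intro continuous_intros c\<psi>)
  then have i: "set_integrable lborel Theta (\<lambda>x. (cmod (complex_of_real (\<psi> (norm x ^ 2))))^2)"
    by (simp add: power2_eq_square)
  have r: "radial_on Theta (\<lambda>x. complex_of_real (\<psi> (norm x ^ 2)))"
    unfolding radial_on_def by simp
  show ?thesis unfolding L2_rad_def using m i r by simp
qed

lemma weight:
  fixes z \<Lambda> \<sigma> :: real
  assumes z: "0 < z" and L: "0 < \<Lambda>" and s0: "0 \<le> \<sigma>" and s2: "\<sigma> < 2"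
  shows "z powr (2 * \<sigma>) \<le> \<Lambda> powr \<sigma> + \<Lambda> powr (\<sigma> - 2) * z^4"
proof -
  have e: "z^2 = z powr 2" using powr_realpow[OF z, of 2] by simp
  have zz: "z powr (2 * \<sigma>) = (z^2) powr \<sigma>"
    unfolding e by (simp only: powr_powr)
  have z2: "z^2 > 0" using z by simp
  have z4: "z^4 = (z^2) powr 2"
  proof -
    have "(z^2) powr 2 = (z^2)^2" using powr_realpow[OF z2, of 2] by simp
    then show ?thesis by simp
  qed
  show ?thesis
  proof (cases "z^2 \<le> \<Lambda>")
    case True
    have "(z^2) powr \<sigma> \<le> \<Lambda> powr \<sigma>" by (rule powr_mono2[OF s0 _ True]) simp
    moreover have "0 \<le> \<Lambda> powr (\<sigma> - 2) * z^4" by simp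
    ultimately show ?thesis unfolding zz by linarith
  next
    case False
    then have lt: "\<Lambda> \<le> z^2" by simp
    have "(z^2) powr (\<sigma> - 2 + 2) = (z^2) powr (\<sigma> - 2) * (z^2) powr 2"
      by (rule powr_add)
    then have "(z^2) powr \<sigma> = (z^2) powr (\<sigma> - 2) * (z^2) powr 2" by simp
    also
    have "\<dots> \<le> \<Lambda> powr (\<sigma> - 2) * (z^2) powr 2"
      by (rule mult_right_mono[OF powr_mono2'[OF _ L lt]]) (use s2 in auto)
    finally have "(z^2) powr \<sigma> \<le> \<Lambda> powr (\<sigma> - 2) * z^4" unfolding z4 .
    moreover have "0 \<le> \<Lambda> powr \<sigma>" by simp
    ultimately show ?thesis unfolding zz by linarith
  qed
qed

definition uk :: "nat \<Rightarrow> real^2 \<Rightarrow> complex" where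
  "uk k x = complex_of_real (psi k (norm x ^ 2))"
definition phik :: "nat \<Rightarrow> real \<Rightarrow> real" where
  "phik k t = 4 * Lp k t"

lemma phik_cont: "continuous_on S (phik k)"
  unfolding phik_def[abs_def] by (intro continuous_intros Lp_cont)

lemma ip_phi: "ip (phik k) (eh n) = - ((besselz n)^2 * ip (psi k) (eh n))"
proof -
  define c where "c = sqrt pi / sqrt (Nn n)"
  have I: "integral {0..1} (\<lambda>t. FF (al n * t) * Lp k t) = - al n * integral {0..1} (\<lambda>t. FF (al n * t) * psi k t)"
    by (rule ibp_1d[OF FF_al _ psi_deriv Pk_deriv _ Lp_cont]) (simp_all add: psi_def Pk_def)
  have "ip (phik k) (eh n) = (4 * c) * integral {0..1} (\<lambda>t. FF (al n * t) * Lp k t)"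
  proof -
    have "ip (phik k) (eh n) = integral {0..1} (\<lambda>t. (4 * c) * (FF (al n * t) * Lp k t))"
      unfolding ip_def phik_def eh_def c_def by (rule integral_cong) (simp add: mult_ac)
    then show ?thesis by simp
  qed
  moreover have "ip (psi k) (eh n) = c * integral {0..1} (\<lambda>t. FF (al n * t) * psi k t)"
  proof -
    have "ip (psi k) (eh n) = integral {0..1} (\<lambda>t. c * (FF (al n * t) * psi k t))"
      unfolding ip_def eh_def c_def by (rule integral_cong) (simp add: mult_ac)
    then show ?thesis by simp
  qed
  ultimately show ?thesis unfolding I by (simp add: al_def)
qed

lemma H_bound:
  fixes \<sigma> \<Lambda> :: real
  assumes s0: "0 \<le> \<sigma>" and s2: "\<sigma> < 2" and L: "0 < \<Lambda>"
  shows "uk k \<in> H_rad \<sigma>"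
    and "(H_norm \<sigma> (uk k))^2 \<le> \<Lambda> powr \<sigma> * (pi * ip (psi k) (psi k)) + \<Lambda> powr (\<sigma> - 2) * (pi * ip (phik k) (phik k))"
proof -
  define a where "a n = (cmod (coef n (uk k)))^2" for n
  define b where "b n = (cmod (coef n (\<lambda>x. complex_of_real (phik k (norm x ^ 2)))))^2" for n
  have cpsi: "continuous_on UNIV (psi k)" by (rule psi_cont)
  have cphi: "continuous_on UNIV (phik k)" by (rule phik_cont)
  have ukf: "uk k = (\<lambda>x. complex_of_real (psi k (norm x ^ 2)))" by (rule ext) (simp add: uk_def)
  have sa: "summable a" and Sa: "suminf a \<le> pi * ip (psi k) (psi k)"
    unfolding a_def ukf by (rule bessel_radial[OF cpsi])+
  have sb: "summable b" and Sb: "suminf b \<le> pi * ip (phik k) (phik k)"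
    unfolding b_def by (rule bessel_radial[OF cphi])+
  have p4: "x^4 = x^2 * x^2" for x :: real
  proof -
    have "x^(2+2) = x^2 * x^2" by (rule power_add)
    then show ?thesis by simp
  qed
  have ba: "b n = (besselz n)^4 * a n" for n
    unfolding p4 a_def b_def ukf coef_sq[OF cpsi] coef_sq[OF cphi] ip_phi
    by (simp add: power_mult_distrib power2_eq_square mult_ac)
  have tle: "besselz n powr (2 * \<sigma>) * a n \<le> \<Lambda> powr \<sigma> * a n + \<Lambda> powr (\<sigma> - 2) * b n" for n
  proof -
    have "besselz n powr (2 * \<sigma>) * a n \<le> (\<Lambda> powr \<sigma> + \<Lambda> powr (\<sigma> - 2) * (besselz n)^4) * a n"
      by (rule mult_right_mono[OF weight[OF besselz_pos L s0 s2]]) (simp add: a_def)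
    then show ?thesis by (simp add: ba algebra_simps)
  qed
  have sr: "summable (\<lambda>n. \<Lambda> powr \<sigma> * a n + \<Lambda> powr (\<sigma> - 2) * b n)"
    by (intro summable_add summable_mult sa sb)
  have st: "summable (\<lambda>n. besselz n powr (2 * \<sigma>) * a n)"
    by (rule summable_comparison_test'[OF sr, of 0]) (use tle in \<open>simp add: a_def\<close>)
  show "uk k \<in> H_rad \<sigma>"
    unfolding H_rad_def using st L2_rad_radial[OF cpsi] by (simp add: a_def ukf)
  have "(\<Sum>n. besselz n powr (2 * \<sigma>) * a n) \<le> (\<Sum>n. \<Lambda> powr \<sigma> * a n + \<Lambda> powr (\<sigma> - 2) * b n)"
    by (rule suminf_le[OF tle st sr])
  also have "\<dots> = \<Lambda> powr \<sigma> * suminf a + \<Lambda> powr (\<sigma> - 2) * suminf b"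
    by (simp add: suminf_add[OF summable_mult[OF sa] summable_mult[OF sb], symmetric] suminf_mult[OF sa] suminf_mult[OF sb])
  also have "\<dots> \<le> \<Lambda> powr \<sigma> * (pi * ip (psi k) (psi k)) + \<Lambda> powr (\<sigma> - 2) * (pi * ip (phik k) (phik k))"
    by (intro add_mono mult_left_mono Sa Sb) simp_all
  finally have F: "(\<Sum>n. besselz n powr (2 * \<sigma>) * a n) \<le> \<Lambda> powr \<sigma> * (pi * ip (psi k) (psi k)) + \<Lambda> powr (\<sigma> - 2) * (pi * ip (phik k) (phik k))" .
  have nn: "0 \<le> (\<Sum>n. besselz n powr (2 * \<sigma>) * a n)"
    by (rule suminf_nonneg[OF st]) (simp add: a_def)
  have "(H_norm \<sigma> (uk k))^2 = (\<Sum>n. besselz n powr (2 * \<sigma>) * a n)"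
    unfolding H_norm_def a_def using nn unfolding a_def by simp
  then show "(H_norm \<sigma> (uk k))^2 \<le> \<Lambda> powr \<sigma> * (pi * ip (psi k) (psi k)) + \<Lambda> powr (\<sigma> - 2) * (pi * ip (phik k) (phik k))"
    using F by simp
qed

lemma ip_phik: "ip (phik k) (phik k) = 16 * ip (Lp k) (Lp k)"
proof -
  have "ip (phik k) (phik k) = integral {0..1} (\<lambda>t. 16 * (Lp k t * Lp k t))"
    unfolding ip_def phik_def by (rule integral_cong) simp
  then show ?thesis unfolding ip_def by simp
qed

lemma Lp_norm_uk:
  fixes p :: real
  assumes p: "p > 0"
  shows "(LINT x:Theta|lborel. cmod (uk k x) powr p) = pi / ((real k + 2) * p + 1)"
proof -
  have c: "continuous_on UNIV (\<lambda>t. \<bar>psi k t\<bar> powr p)"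
    by (intro continuous_on_powr' continuous_intros psi_cont) (use p in auto)
  have "(LINT x:Theta|lborel. cmod (uk k x) powr p) = (LINT x:Theta|lborel. (\<lambda>t. \<bar>psi k t\<bar> powr p) (norm x ^ 2))"
    unfolding uk_def by simp
  also have "\<dots> = pi * integral {0..1} (\<lambda>t. \<bar>psi k t\<bar> powr p)"
    by (rule radial_integral_cont(2)[OF c])
  also have "integral {0..1} (\<lambda>t. \<bar>psi k t\<bar> powr p) = integral {0..1} (\<lambda>t. (1 - t) powr ((real k + 2) * p))"
  proof (rule integral_cong)
    fix t :: real assume t: "t \<in> {0..1}"
    show "\<bar>psi k t\<bar> powr p = (1 - t) powr ((real k + 2) * p)"
    proof (cases "t = 1")
      case True then show ?thesis by (simp add: psi_def)
    next
      case False
      then have tp: "1 - t > 0" using t by simp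
      have "\<bar>psi k t\<bar> = (1 - t) powr (real k + 2)"
        unfolding psi_def using powr_realpow[OF tp, of "k+2"] tp by (simp add: add.commute)
      then show ?thesis using tp by (simp add: powr_powr)
    qed
  qed
  also have "\<dots> = 1 / ((real k + 2) * p + 1)"
    by (rule integral_unique[OF has_int_powr]) (use p in simp)
  finally show ?thesis by simp
qed


theorem mainTheorem5:
  fixes \<alpha> :: real
  assumes "\<alpha> \<ge> 2"
  shows "\<not> (\<exists>\<sigma> C. 0 \<le> \<sigma> \<and> \<sigma> < 1/2 \<and> C > 0 \<and>
            (\<forall>u \<in> H_rad \<sigma>.
               set_integrable lborel Theta (\<lambda>x. cmod (u x) powr (\<alpha> + 2)) \<and>
               (LINT x:Theta|lborel. cmod (u x) powr (\<alpha> + 2)) powr (1 / (\<alpha> + 2))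
                 \<le> C * H_norm \<sigma> u))"
proof
  assume "\<exists>\<sigma> C. 0 \<le> \<sigma> \<and> \<sigma> < 1/2 \<and> C > 0 \<and>
            (\<forall>u \<in> H_rad \<sigma>.
               set_integrable lborel Theta (\<lambda>x. cmod (u x) powr (\<alpha> + 2)) \<and>
               (LINT x:Theta|lborel. cmod (u x) powr (\<alpha> + 2)) powr (1 / (\<alpha> + 2))
                 \<le> C * H_norm \<sigma> u)"
  then obtain \<sigma> C where s0: "0 \<le> \<sigma>" and s1: "\<sigma> < 1/2" and C: "C > 0"
    and H: "\<And>u. u \<in> H_rad \<sigma> \<Longrightarrow>
               (LINT x:Theta|lborel. cmod (u x) powr (\<alpha> + 2)) powr (1 / (\<alpha> + 2))
                 \<le> C * H_norm \<sigma> u" by blast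
  define p where "p = \<alpha> + 2"
  have p4: "p \<ge> 4" using assms by (simp add: p_def)
  have pp: "p > 0" using p4 by simp
  define e where "e = (1 - \<sigma>) / 2 - 1 / p"
  have ip4: "1 / p \<le> 1 / 4" using p4 by (simp add: divide_simps)
  have h14: "(1 - \<sigma>) / 2 > 1 / 4" using s1 by (simp add: field_simps)
  have e: "e > 0" unfolding e_def using h14 ip4 by linarith
  define A where "A = (pi / (2 * p)) powr (1 / p)"
  have A: "A > 0" unfolding A_def using pp by simp
  define B where "B = C * sqrt (385 * pi)"
  have B: "B > 0" unfolding B_def using C by simp
  define k where "k = nat \<lceil>(B / A + 1) powr (1 / e)\<rceil>"
  define m where "m = real k + 2"
  have m2: "m \<ge> 2" by (simp add: m_def)
  have mp: "m > 0" using m2 by simp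
  have mge: "(B / A + 1) powr (1 / e) \<le> m"
  proof -
    have "(B / A + 1) powr (1 / e) \<le> real k" unfolding k_def by linarith
    then show ?thesis unfolding m_def by linarith
  qed
  have "B / A > 0" by (rule divide_pos_pos[OF B A])
  then have BA: "B / A + 1 > 0" by linarith
  have me: "B / A + 1 \<le> m powr e"
  proof -
    have "((B / A + 1) powr (1 / e)) powr e \<le> m powr e"
      by (rule powr_mono2[OF _ _ mge]) (use e in auto)
    moreover have "((B / A + 1) powr (1 / e)) powr e = B / A + 1"
      using e BA by (simp add: powr_powr)
    ultimately show ?thesis by simp
  qed
  have s2: "\<sigma> < 2" using s1 by simp
  have mem: "uk k \<in> H_rad \<sigma>" by (rule H_bound(1)[OF s0 s2 mp])
  have Hb: "(H_norm \<sigma> (uk k))^2 \<le> m powr \<sigma> * (pi * ip (psi k) (psi k)) + m powr (\<sigma> - 2) * (pi * ip (phik k) (phik k))"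
    by (rule H_bound(2)[OF s0 s2 mp])
  have t1: "m powr \<sigma> * (pi * ip (psi k) (psi k)) \<le> pi * m powr (\<sigma> - 1)"
  proof -
    have "ip (psi k) (psi k) \<le> 1 / m" unfolding ip_psi m_def by (simp add: divide_simps)
    then have "m powr \<sigma> * (pi * ip (psi k) (psi k)) \<le> m powr \<sigma> * (pi * (1 / m))"
      by (intro mult_left_mono) simp_all
    also have "\<dots> = pi * (m powr \<sigma> / m powr 1)" using mp by simp
    also have "\<dots> = pi * m powr (\<sigma> - 1)" by (simp only: powr_diff)
    finally show ?thesis .
  qed
  have t2: "m powr (\<sigma> - 2) * (pi * ip (phik k) (phik k)) \<le> 384 * pi * m powr (\<sigma> - 1)"
  proof -
    have "ip (phik k) (phik k) \<le> 16 * (24 * m)" unfolding ip_phik m_def using ip_Lp[of k] by simp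
    then have "m powr (\<sigma> - 2) * (pi * ip (phik k) (phik k)) \<le> m powr (\<sigma> - 2) * (pi * (16 * (24 * m)))"
      by (intro mult_left_mono) simp_all
    also have "\<dots> = 384 * pi * (m powr (\<sigma> - 2) * m powr 1)" using mp by simp
    also have "m powr (\<sigma> - 2) * m powr 1 = m powr (\<sigma> - 1)"
    proof -
      have "m powr (\<sigma> - 1) = m powr ((\<sigma> - 2) + 1)" by simp
      also have "\<dots> = m powr (\<sigma> - 2) * m powr 1" by (rule powr_add)
      finally show ?thesis by simp
    qed
    finally show ?thesis by simp
  qed
  have H2: "(H_norm \<sigma> (uk k))^2 \<le> 385 * pi * m powr (\<sigma> - 1)"
    using Hb t1 t2 by linarith
  have sm: "summable (\<lambda>n. besselz n powr (2*\<sigma>) * (cmod (coef n (uk k)))^2)"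
    using mem by (simp add: H_rad_def)
  have "0 \<le> (\<Sum>n. besselz n powr (2*\<sigma>) * (cmod (coef n (uk k)))^2)"
    by (rule suminf_nonneg[OF sm]) simp
  then have Hn0: "H_norm \<sigma> (uk k) \<ge> 0" unfolding H_norm_def by simp
  have Hle: "H_norm \<sigma> (uk k) \<le> sqrt (385 * pi) * m powr ((\<sigma> - 1) / 2)"
  proof -
    have "H_norm \<sigma> (uk k) = sqrt ((H_norm \<sigma> (uk k))^2)" using Hn0 by simp
    also have "\<dots> \<le> sqrt (385 * pi * m powr (\<sigma> - 1))" using H2 by (rule real_sqrt_le_mono)
    also have "\<dots> = sqrt (385 * pi) * sqrt (m powr (\<sigma> - 1))" by (simp add: real_sqrt_mult)
    also have "sqrt (m powr (\<sigma> - 1)) = m powr ((\<sigma> - 1) / 2)"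
    proof -
      have "sqrt (m powr (\<sigma> - 1)) = (m powr (\<sigma> - 1)) powr (1/2)" by (simp add: powr_half_sqrt)
      also have "\<dots> = m powr ((\<sigma> - 1) / 2)" by (simp add: powr_powr)
      finally show ?thesis .
    qed
    finally show ?thesis .
  qed
  have CH: "C * H_norm \<sigma> (uk k) \<le> B * m powr ((\<sigma> - 1) / 2)"
    unfolding B_def using mult_left_mono[OF Hle, of C] C by (simp add: mult_ac)
  have L: "(LINT x:Theta|lborel. cmod (uk k x) powr p) = pi / (m * p + 1)"
    using Lp_norm_uk[OF pp, of k] by (simp add: m_def)
  have low: "A / m powr (1 / p) \<le> (pi / (m * p + 1)) powr (1 / p)"
  proof -
    have "pi / (2 * m * p) \<le> pi / (m * p + 1)"
    proof (rule divide_left_mono)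
      have "m * p \<ge> 2 * 4" by (rule mult_mono) (use m2 p4 in auto)
      then show "m * p + 1 \<le> 2 * m * p" by simp
    qed (use mp pp in \<open>auto intro!: mult_pos_pos add_pos_pos\<close>)
    then have "(pi / (2 * m * p)) powr (1 / p) \<le> (pi / (m * p + 1)) powr (1 / p)"
      by (rule powr_mono2[rotated 2]) (use mp pp in auto)
    moreover have "(pi / (2 * m * p)) powr (1 / p) = A / m powr (1 / p)"
    proof -
      have eq: "pi / (2 * m * p) = (pi / (2 * p)) / m" by (simp add: field_simps)
      show ?thesis unfolding A_def eq by (rule powr_divide)
    qed
    ultimately show ?thesis by simp
  qed
  have main: "A / m powr (1 / p) \<le> B * m powr ((\<sigma> - 1) / 2)"
    using low H[OF mem] CH unfolding L[unfolded p_def] p_def by linarith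
  have mpp: "m powr (1 / p) > 0" using mp by simp
  have "A \<le> B * (m powr ((\<sigma> - 1) / 2) * m powr (1 / p))"
    using main mpp by (simp add: divide_le_eq mult_ac)
  also have "m powr ((\<sigma> - 1) / 2) * m powr (1 / p) = m powr (- e)"
  proof -
    have x: "(\<sigma> - 1) / 2 + 1 / p = - e" unfolding e_def by (simp add: field_simps)
    have "m powr ((\<sigma> - 1) / 2) * m powr (1 / p) = m powr ((\<sigma> - 1) / 2 + 1 / p)"
      by (rule powr_add[symmetric])
    then show ?thesis unfolding x .
  qed
  finally have "A \<le> B * m powr (- e)" .
  then have "A * m powr e \<le> B * (m powr (- e) * m powr e)"
    using mult_right_mono[of A "B * m powr (- e)" "m powr e"] by (simp add: mult_ac)
  also have "m powr (- e) * m powr e = 1" using mp by (simp add: powr_add[symmetric])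
  finally have "A * m powr e \<le> B" by simp
  moreover have "A * (B / A + 1) \<le> A * m powr e" using me A by simp
  moreover have "A * (B / A + 1) = B + A" using A by (simp add: field_simps)
  ultimately show False using A by linarith
qed


end
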